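(* Fix $l\in\mathbb N$ and $A>0$, and let $G_l$ be a random variable with distribution function $$\mathbb P\{G_l\le x\}=1-e^{-e^x}\Big(1+e^x+\cdots+\frac{(e^x)^{l-1}}{(l-1)!}\Big),\quad x\in\mathbb R.$$ Then there exists a constant $C_l=C_l(A)>0$ such that $$\mathbb P\{s+u<G_l\le s+v\}\le C_l\,(v-u)\,e^{-|s|}$$ for all $u<v$ in $[-A,A]$ and all $s\in\mathbb R$. *)

theory Defs
  imports "HOL-Probability.Probability"
begin

definition G_cdf :: "nat \<Rightarrow> real \<Rightarrow> real" where
  "G_cdf l x = 1 - exp (- exp x) * (\<Sum>k<l. exp x ^ k / fact k)"

end

theory Submission
  imports Defs
begin

lemma pow_fact_le_exp:
  fixes t :: real assumes "t \<ge> 0" shows "t ^ n / fact n \<le> exp t"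
proof -
  have s: "summable (\<lambda>k. t ^ k / fact k)" using summable_exp[of t]
    by (simp add: divide_inverse mult.commute)
  have "t ^ n / fact n = (\<Sum>k\<in>{n}. t ^ k / fact k)" by simp
  also have "\<dots> \<le> (\<Sum>k. t ^ k / fact k)"
    by (rule sum_le_suminf[OF s]) (use assms in auto)
  also have "\<dots> = exp t" by (simp add: exp_def scaleR_conv_of_real divide_inverse mult.commute)
  finally show ?thesis .
qed

definition hh :: "nat \<Rightarrow> real \<Rightarrow> real" where
  "hh k x = exp (- exp x) * exp x ^ k / fact k"

lemma hh_deriv:
  "(hh k has_real_derivative (real k * hh k x - real (Suc k) * hh (Suc k) x)) (at x)"
proof -
  have "((\<lambda>x. exp (- exp x) * exp x ^ k / fact k) has_real_derivative
     (exp (- exp x) * (- exp x) * exp x ^ k + exp (- exp x) * (real k * exp x ^ (k - 1) * exp x)) / fact k) (at x)"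
    by (auto intro!: derivative_eq_intros)
  moreover have "(exp (- exp x) * (- exp x) * exp x ^ k + exp (- exp x) * (real k * exp x ^ (k - 1) * exp x)) / fact k
      = real k * hh k x - real (Suc k) * hh (Suc k) x"
  proof -
    have a: "real k * exp x ^ (k - 1) * exp x = real k * exp x ^ k"
      by (cases k) (auto simp: algebra_simps)
    have b: "real (Suc k) * hh (Suc k) x = exp (- exp x) * exp x ^ Suc k / fact k"
      unfolding hh_def by (simp add: field_simps del: of_nat_Suc)
    show ?thesis unfolding a b by (simp add: hh_def field_simps)
  qed
  ultimately show ?thesis unfolding hh_def[abs_def] by simp
qed

lemma cdf_eq: "G_cdf l x = 1 - (\<Sum>k<l. hh k x)"
  unfolding G_cdf_def hh_def by (simp add: sum_distrib_left)

lemma cdf_deriv: "(G_cdf l has_real_derivative (real l * hh l x)) (at x)"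
proof -
  have "((\<lambda>x. 1 - (\<Sum>k<l. hh k x)) has_real_derivative
       (0 - (\<Sum>k<l. real k * hh k x - real (Suc k) * hh (Suc k) x))) (at x)"
    by (intro derivative_intros hh_deriv)
  moreover have "(\<Sum>k<l. real k * hh k x - real (Suc k) * hh (Suc k) x) = - (real l * hh l x)"
  proof -
    have "(\<Sum>k<l. real k * hh k x - real (Suc k) * hh (Suc k) x)
        = - (\<Sum>k<l. real (Suc k) * hh (Suc k) x - real k * hh k x)"
      by (simp add: sum_negf[symmetric] del: of_nat_Suc)
    also have "\<dots> = - (real l * hh l x)"
      using sum_lessThan_telescope[of "\<lambda>k. real k * hh k x" l] by simp
    finally show ?thesis .
  qed
  ultimately show ?thesis unfolding cdf_eq[abs_def] by simp
qed

lemma hh_bound: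
  assumes "l \<ge> 1"
  shows "real l * hh l x \<le> real l * (real l + 1) * exp (- \<bar>x\<bar>)"
proof -
  define t where "t = exp x"
  have t0: "t > 0" by (simp add: t_def)
  show ?thesis
  proof (cases "x \<ge> 0")
    case True
    have "real l * hh l x = real l * (real l + 1) * (t ^ Suc l / fact (Suc l) * exp (- t)) / t"
    proof -
      have f: "fact (Suc l) = (real l + 1) * fact l" by (simp add: algebra_simps)
      have "(fact l :: real) > 0" by simp
      have l1: "real l + 1 > 0" by simp
      have "real l * (real l + 1) * (t ^ Suc l / ((real l + 1) * fact l) * exp (- t)) / t
          = real l * (t ^ Suc l / t) * exp (- t) / fact l"
      proof -
        have "(real l + 1) * (t ^ Suc l / ((real l + 1) * fact l)) = t ^ Suc l / fact l"
          using l1 by simp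
        hence "real l * (real l + 1) * (t ^ Suc l / ((real l + 1) * fact l) * exp (- t)) / t
           = real l * (t ^ Suc l / fact l) * exp (- t) / t" by (simp add: mult.assoc)
        thus ?thesis by simp
      qed
      also have "t ^ Suc l / t = t ^ l" using t0 by simp
      finally show ?thesis unfolding f by (simp add: hh_def t_def)
    qed
    also have "\<dots> \<le> real l * (real l + 1) * 1 / t"
    proof -
      have "t ^ Suc l / fact (Suc l) \<le> exp t" using pow_fact_le_exp[of t "Suc l"] t0 by (simp only: less_imp_le)
      hence "t ^ Suc l / fact (Suc l) * exp (- t) \<le> exp t * exp (- t)"
        by (rule mult_right_mono) simp
      hence "t ^ Suc l / fact (Suc l) * exp (- t) \<le> 1" by (simp only: exp_minus_inverse)
      hence "real l * (real l + 1) * (t ^ Suc l / fact (Suc l) * exp (- t)) \<le> real l * (real l + 1) * 1"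
        by (rule mult_left_mono) simp
      thus ?thesis by (rule divide_right_mono) (use t0 in simp)
    qed
    also have "\<dots> = real l * (real l + 1) * exp (- \<bar>x\<bar>)"
      using True by (simp add: t_def exp_minus field_simps)
    finally show ?thesis .
  next
    case False
    obtain m where m: "l = Suc m" using assms by (cases l) auto
    have "real l * hh l x = t * (t ^ m / fact m * exp (- t))"
      unfolding hh_def t_def m by (simp add: field_simps del: of_nat_Suc)
    also have "\<dots> \<le> t * 1"
    proof -
      have "t ^ m / fact m \<le> exp t" using pow_fact_le_exp t0 by simp
      hence "t ^ m / fact m * exp (- t) \<le> exp t * exp (- t)"
        by (rule mult_right_mono) simp
      hence "t ^ m / fact m * exp (- t) \<le> 1" by (simp only: exp_minus_inverse)
      thus ?thesis by (rule mult_left_mono) (use t0 in simp)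
    qed
    also have "\<dots> \<le> real l * (real l + 1) * exp (- \<bar>x\<bar>)"
    proof -
      have l1: "1 \<le> real l" using assms by simp
      have "1 * 1 \<le> real l * (real l + 1)" by (rule mult_mono) (use l1 in auto)
      moreover have "t = exp (- \<bar>x\<bar>)" using False by (simp add: t_def)
      ultimately show ?thesis using t0 by simp
    qed
    finally show ?thesis .
  qed
qed

theorem lemma2p13:
  fixes M :: "'a measure" and G :: "'a \<Rightarrow> real" and l :: nat and A :: real
  assumes "prob_space M"
    and "G \<in> borel_measurable M"
    and "l \<ge> 1"
    and "A > 0"
    and "\<And>x. measure M {\<omega> \<in> space M. G \<omega> \<le> x} = G_cdf l x"
  shows "\<exists>C > 0. \<forall>s u v. -A \<le> u \<longrightarrow> u < v \<longrightarrow> v \<le> A \<longrightarrow>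
           measure M {\<omega> \<in> space M. s + u < G \<omega> \<and> G \<omega> \<le> s + v}
             \<le> C * (v - u) * exp (- \<bar>s\<bar>)"
proof -
  interpret prob_space M by fact
  define K where "K = real l * (real l + 1)"
  have K0: "K > 0" using assms(3) by (simp add: K_def)
  have meas: "\<And>x. {\<omega> \<in> space M. G \<omega> \<le> x} \<in> sets M"
    using assms(2) by measurable
  show ?thesis
  proof (intro exI[of _ "K * exp A"] conjI allI impI)
    show "K * exp A > 0" using K0 by simp
    fix s u v :: real
    assume uv: "-A \<le> u" "u < v" "v \<le> A"
    have "{\<omega> \<in> space M. s + u < G \<omega> \<and> G \<omega> \<le> s + v} =
          {\<omega> \<in> space M. G \<omega> \<le> s + v} - {\<omega> \<in> space M. G \<omega> \<le> s + u}" by auto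
    note seteq = this
    have "measure M {\<omega> \<in> space M. s + u < G \<omega> \<and> G \<omega> \<le> s + v}
        = G_cdf l (s + v) - G_cdf l (s + u)"
    proof -
      have "{\<omega> \<in> space M. G \<omega> \<le> s + u} \<subseteq> {\<omega> \<in> space M. G \<omega> \<le> s + v}" using uv by auto
      hence "prob ({\<omega> \<in> space M. G \<omega> \<le> s + v} - {\<omega> \<in> space M. G \<omega> \<le> s + u})
         = prob {\<omega> \<in> space M. G \<omega> \<le> s + v} - prob {\<omega> \<in> space M. G \<omega> \<le> s + u}"
        by (rule finite_measure_Diff[OF meas meas])
      thus ?thesis using assms(5) seteq by simp
    qed
    also obtain z where z: "s + u < z" "z < s + v"
      "G_cdf l (s + v) - G_cdf l (s + u) = ((s + v) - (s + u)) * (real l * hh l z)"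
      using MVT2[of "s+u" "s+v" "G_cdf l" "\<lambda>x. real l * hh l x"] uv cdf_deriv by auto
    note z(3)
    also have "((s + v) - (s + u)) * (real l * hh l z) \<le> (v - u) * (K * exp (- \<bar>z\<bar>))"
      using hh_bound[OF assms(3), of z] uv unfolding K_def by (simp add: mult.assoc)
    also have "\<dots> \<le> (v - u) * (K * (exp A * exp (- \<bar>s\<bar>)))"
    proof -
      have "- \<bar>z\<bar> \<le> A + - \<bar>s\<bar>" using z uv by auto
      hence "exp (- \<bar>z\<bar>) \<le> exp A * exp (- \<bar>s\<bar>)" by (simp add: exp_add[symmetric])
      thus ?thesis using K0 uv by (intro mult_left_mono) auto
    qed
    finally show "measure M {\<omega> \<in> space M. s + u < G \<omega> \<and> G \<omega> \<le> s + v}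
             \<le> K * exp A * (v - u) * exp (- \<bar>s\<bar>)" by (simp add: algebra_simps)
  qed
qed

end
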